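(* For $n\ge 3$, \begin{align*} (\underbrace{\mathfrak C_0+\cdots+\mathfrak C_0}_{7})^n&=\binom{2n-1}{6}\mathfrak C_{2n}+\frac{12n^2-60n+83}{15}\binom{2n}{2}\binom{2n-3}{4}\mathfrak C_{2n-2}\\ &\quad+\frac{(4n^2-24n+39)(12n^2-72n+109)}{15}\binom{2n}{4}\binom{2n-5}{2}\mathfrak C_{2n-4}+\binom{2n}{6}(2n-7)^6\mathfrak C_{2n-6}. \end{align*}
   Context: The numbers $\mathfrak C_{2n}$ (Cauchy numbers with level $2$) are defined by $\frac{t}{{\rm arcsinh}\,t}=\sum_{n=0}^\infty\mathfrak C_{2n}\frac{t^{2n}}{(2n)!}$. Convolution notation: $(\mathfrak C_{2j_1}+\cdots+\mathfrak C_{2j_k})^n:=\sum_{i_1+\cdots+i_k=n,\ i_1,\dots,i_k\ge0}\frac{(2n)!}{(2i_1)!\cdots(2i_k)!}\mathfrak C_{2i_1+2j_1}\cdots\mathfrak C_{2i_k+2j_k}$ (here with $k=7$ summands, all $j_i=0$). *)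

theory Defs
  imports "HOL-Computational_Algebra.Formal_Power_Series"
begin

(* Maclaurin series of arcsinh: integral of (1 + X^2)^(-1/2) with constant term 0 *)
definition arcsinh_fps :: "real fps" where
  "arcsinh_fps = fps_integral ((fps_binomial (-1/2)) oo (fps_X ^ 2)) 0"

(* exponential generating function t / arcsinh t = inverse (arcsinh t / t) *)
definition cauchy2_egf :: "real fps" where
  "cauchy2_egf = inverse (fps_shift 1 arcsinh_fps)"

(* Cauchy numbers with level 2: \<CC>_{2n} = (2n)! [t^{2n}] t/arcsinh t ;
   argument m is the full index 2n *)
definition cauchy2 :: "nat \<Rightarrow> real" where
  "cauchy2 m = fact m * fps_nth cauchy2_egf m"

(* (\<CC>_{2j_1}+...+\<CC>_{2j_k})^n with all j_i = 0, k = number of summands: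
   sum over (i_1,...,i_k) with i_1+...+i_k = n of
   (2n)!/((2i_1)!...(2i_k)!) * \<CC>_{2i_1} ... \<CC>_{2i_k} *)
definition cauchy2_conv :: "nat \<Rightarrow> nat \<Rightarrow> real" where
  "cauchy2_conv k n =
     (\<Sum>is\<in>{is::nat list. length is = k \<and> sum_list is = n}.
        fact (2*n) / (\<Prod>i\<leftarrow>is. fact (2*i)) * (\<Prod>i\<leftarrow>is. cauchy2 (2*i)))"

end

theory Submission imports Defs begin
unbundle fps_syntax

lemma compose_X2_nth: "(F oo fps_X^2) $ m = (if even m then F $ (m div 2) else (0::real))"
proof -
  have "(F oo fps_X^2) $ m = (\<Sum>i=0..m. F$i * (if m = 2*i then 1 else 0))"
    by (simp add: fps_compose_nth power_mult[symmetric])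
  also have "\<dots> = (if even m then F $ (m div 2) else 0)"
  proof (cases "even m")
    case True
    then show ?thesis
    proof -
      have e: "\<And>i. (m = 2*i) = (i = m div 2)" using True by auto
      have "(\<Sum>i = 0..m. F $ i * (if i = m div 2 then 1 else 0)) = (\<Sum>i = 0..m. (if i = m div 2 then F $ i else 0))" by (rule sum.cong) auto
      then show ?thesis using True by (simp add: e)
    qed
  next
    case False
    then show ?thesis by (auto intro!: sum.neutral)
  qed
  finally show ?thesis .
qed

definition BB :: "real fps" where "BB = fps_binomial (-1/2) oo fps_X^2"
definition GG :: "real fps" where "GG = fps_shift 1 arcsinh_fps"
definition QQ :: "real fps" where "QQ = inverse BB"
definition ff :: "real fps" where "ff = inverse GG"

lemma A_deriv: "fps_deriv arcsinh_fps = BB"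
  by (simp add: arcsinh_fps_def BB_def fps_deriv_fps_integral)

lemma A_XG: "arcsinh_fps = fps_X * GG"
  by (rule fps_ext) (auto simp: GG_def arcsinh_fps_def fps_X_mult_nth)

lemma BB0: "BB $ 0 = 1" by (simp add: BB_def)
lemma GG0: "GG $ 0 = 1" by (simp add: GG_def arcsinh_fps_def BB0[unfolded BB_def])

lemma QB: "QQ * BB = 1" by (simp add: QQ_def BB0 inverse_mult_eq_1)
lemma fG: "ff * GG = 1" by (simp add: ff_def GG0 inverse_mult_eq_1)

lemma BB_sq: "(1 + fps_X^2) * BB^2 = 1"
proof -
  have "fps_binomial (-1/2) ^ 2 = fps_binomial (-1::real)"
    by (simp add: power2_eq_square fps_binomial_add_mult[symmetric])
  hence "(1 + fps_X) * fps_binomial (-1/2) ^ 2 = (1::real fps)"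
    by (simp add: fps_binomial_1[symmetric] fps_binomial_add_mult[symmetric])
  hence "((1 + fps_X) * fps_binomial (-1/2) ^ 2) oo fps_X^2 = (1::real fps) oo fps_X^2" by simp
  thus ?thesis
    by (simp add: BB_def fps_compose_mult_distrib fps_compose_power fps_compose_add_distrib)
qed

lemma G_ode: "BB = GG + fps_X * fps_deriv GG"
proof -
  have "fps_deriv arcsinh_fps = fps_deriv (fps_X * GG)" using A_XG by simp
  thus ?thesis by (simp add: A_deriv add.commute)
qed

lemma f_ode: "fps_X * fps_deriv ff - ff = - BB * ff^2"
proof -
  have h1: "ff * GG = 1" by (rule fG)
  have h2: "fps_deriv ff * GG + ff * fps_deriv GG = 0"
    using arg_cong[OF h1, of fps_deriv] by (simp add: add.commute)
  show ?thesis using h1 h2 G_ode by algebra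
qed

lemma Q_sq: "QQ^2 = 1 + fps_X^2"
  using BB_sq QB by algebra

lemma QQ_deriv: "QQ * fps_deriv QQ = fps_X"
proof -
  have "fps_deriv (QQ * QQ) = fps_deriv (1 + fps_X^2)" using Q_sq by (simp add: power2_eq_square)
  hence "2 * (QQ * fps_deriv QQ) = 2 * fps_X"
    by (simp add: power2_eq_square algebra_simps mult_2)
  thus ?thesis by simp
qed

lemma pow_ode: "fps_X * fps_deriv (ff^(Suc j)) - fps_const (real (Suc j)) * ff^(Suc j)
   = - fps_const (real (Suc j)) * BB * ff^(Suc (Suc j))"
proof -
  have d: "fps_deriv (ff^Suc j) = fps_const (real (Suc j)) * fps_deriv ff * ff^j"
    by (simp only: fps_deriv_power diff_Suc_1)
  have "fps_X * fps_deriv (ff^(Suc j)) - fps_const (real (Suc j)) * ff^(Suc j)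
     = fps_const (real (Suc j)) * ff^j * (fps_X * fps_deriv ff - ff)"
    unfolding d by (simp add: algebra_simps)
  also have "\<dots> = - fps_const (real (Suc j)) * BB * ff^(Suc (Suc j))"
  proof -
    have gen: "\<And>c. c * ff^j * (fps_X * fps_deriv ff - ff) = - c * BB * ff^(Suc (Suc j))"
      unfolding f_ode by (simp add: algebra_simps power2_eq_square)
    show ?thesis by (rule gen)
  qed
  finally show ?thesis .
qed

definition WW :: "nat \<Rightarrow> real fps \<Rightarrow> real fps" where
  "WW k V = fps_X * fps_deriv V - fps_const (real k) * V"
definition SS :: "nat \<Rightarrow> real fps \<Rightarrow> real fps" where
  "SS k V = fps_X^2 * WW k V + (1 + fps_X^2) * WW (Suc k) (WW k V)"

lemma SS_pow: "SS (Suc j) (ff^(Suc j)) = fps_const (real (Suc j) * real (Suc (Suc j))) * ff^(Suc (Suc (Suc j)))"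
proof -
  define W where "W = WW (Suc j) (ff^(Suc j))"
  have W: "W = - fps_const (real (Suc j)) * BB * ff^(Suc (Suc j))"
    unfolding W_def WW_def by (rule pow_ode)
  have QW: "QQ * W = - fps_const (real (Suc j)) * ff^(Suc (Suc j))"
    unfolding W using QB by (simp add: algebra_simps)
  have W2: "WW (Suc (Suc j)) (ff^(Suc (Suc j))) = - fps_const (real (Suc (Suc j))) * BB * ff^(Suc (Suc (Suc j)))"
    unfolding WW_def by (rule pow_ode)
  have "SS (Suc j) (ff^(Suc j)) = QQ * (fps_X * fps_deriv (QQ * W) - fps_const (real (Suc (Suc j))) * (QQ * W))"
  proof -
    have "QQ * (fps_X * fps_deriv (QQ * W) - fps_const (real (Suc (Suc j))) * (QQ * W))
       = fps_X * (QQ * fps_deriv QQ) * W + QQ^2 * (fps_X * fps_deriv W - fps_const (real (Suc (Suc j))) * W)"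
      by (simp add: algebra_simps power2_eq_square)
    also have "\<dots> = SS (Suc j) (ff^(Suc j))"
      unfolding QQ_deriv Q_sq SS_def W_def WW_def by (simp add: power2_eq_square)
    finally show ?thesis by simp
  qed
  also have "\<dots> = - fps_const (real (Suc j)) * (QQ * WW (Suc (Suc j)) (ff^(Suc (Suc j))))"
    unfolding QW WW_def by (simp add: algebra_simps)
  also have "\<dots> = fps_const (real (Suc j) * real (Suc (Suc j))) * ff^(Suc (Suc (Suc j)))"
    unfolding W2 using QB by (simp add: algebra_simps)
  finally show ?thesis .
qed

lemma WW_nth: "WW k V $ m = (real m - real k) * V $ m"
  by (cases m) (auto simp: WW_def algebra_simps)

lemma SS_nth: "m \<ge> 2 \<Longrightarrow> SS k V $ m = (real m - k) * (real m - k - 1) * V $ m + (real m - k - 2)^2 * V $ (m-2)"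
  apply (cases m, simp, rename_tac i, case_tac i, simp)
  by (simp add: SS_def distrib_right fps_X_power_mult_nth WW_nth of_nat_diff power2_eq_square algebra_simps)



lemma GG_odd: "GG $ Suc (2*k) = 0"
  by (simp add: GG_def arcsinh_fps_def BB_def[symmetric] compose_X2_nth[of _ "Suc (2*k)", folded BB_def] del: fps_integral_nth_0_Suc)
    (simp add: BB_def compose_X2_nth)

lemma even_comp: assumes "\<And>k. F $ Suc (2*k) = (0::real)"
  shows "F = Abs_fps (\<lambda>k. F $ (2*k)) oo fps_X^2"
proof (rule fps_ext)
  fix m
  show "F $ m = (Abs_fps (\<lambda>k. F $ (2*k)) oo fps_X^2) $ m"
  proof (cases "even m")
    case True then show ?thesis by (simp add: compose_X2_nth)
  next
    case False
    then obtain k where "m = Suc (2*k)" by (metis oddE Suc_eq_plus1)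
    then show ?thesis using assms by (simp add: compose_X2_nth)
  qed
qed

definition KK :: "real fps" where "KK = Abs_fps (\<lambda>k. GG $ (2*k))"
definition HH :: "real fps" where "HH = inverse KK"

lemma ff_comp: "ff = HH oo fps_X^2"
proof -
  have "GG = KK oo fps_X^2" unfolding KK_def by (rule even_comp[OF GG_odd])
  moreover have "KK $ 0 = 1" by (simp add: KK_def GG0)
  ultimately show ?thesis
    by (simp add: ff_def HH_def fps_inverse_compose)
qed

lemma ff_nth_even: "ff $ (2*i) = HH $ i"
  by (simp add: ff_comp compose_X2_nth)

lemma ff7_nth: "(ff^7) $ (2*n) = (\<Sum>v\<in>natpermute n 7. \<Prod>j=0..<7. ff $ (2 * (v!j)))"
proof -
  have "ff^7 = HH^7 oo fps_X^2" by (simp add: ff_comp fps_compose_power)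
  hence "(ff^7) $ (2*n) = (HH^7) $ n" by (simp add: compose_X2_nth)
  also have "\<dots> = (\<Sum>v\<in>natpermute n 7. \<Prod>j=0..6. HH $ (v!j))"
    by (simp add: fps_power_nth)
  also have "\<dots> = (\<Sum>v\<in>natpermute n 7. \<Prod>j=0..<7. ff $ (2 * (v!j)))"
  proof -
    have e: "{0..<7::nat} = {0..6}" by auto
    show ?thesis by (simp add: ff_nth_even e)
  qed
  finally show ?thesis .
qed

lemma prod_list_map_mult: "(\<Prod>i\<leftarrow>xs. (a i::real) * b i) = (\<Prod>i\<leftarrow>xs. a i) * (\<Prod>i\<leftarrow>xs. b i)"
  by (induct xs) (simp_all add: algebra_simps)

lemma prod_list_map_nth: "(\<Prod>i\<leftarrow>v. (g i::real)) = (\<Prod>j=0..<length v. g (v!j))"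
  by (simp add: prod.list_conv_set_nth)

lemma cauchy2_ff: "cauchy2 m = fact m * ff $ m"
  by (simp add: cauchy2_def cauchy2_egf_def ff_def GG_def)

lemma conv_ff: "cauchy2_conv 7 n = fact (2*n) * (ff^7) $ (2*n)"
proof -
  have "cauchy2_conv 7 n = (\<Sum>v\<in>natpermute n 7. fact (2*n) * (\<Prod>j=0..<7. ff $ (2 * (v!j))))"
    unfolding cauchy2_conv_def natpermute_def[symmetric]
  proof (rule sum.cong[OF refl])
    fix v assume v: "v \<in> natpermute n 7"
    have nz: "(\<Prod>i\<leftarrow>v. fact (2*i)::real) \<noteq> 0"
      by (induct v) auto
    show "fact (2 * n) / (\<Prod>i\<leftarrow>v. fact (2 * i)) * (\<Prod>i\<leftarrow>v. cauchy2 (2 * i)) =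
         fact (2 * n) * (\<Prod>j = 0..<7. ff $ (2 * v ! j))"
      using v nz by (simp add: cauchy2_ff prod_list_map_mult prod_list_map_nth[of "\<lambda>i. ff $ (2*i)"] natpermute_def)
  qed
  also have "\<dots> = fact (2*n) * (ff^7) $ (2*n)"
    by (simp add: ff7_nth sum_distrib_left)
  finally show ?thesis .
qed


lemma ch: "real (a choose k) = (\<Prod>i=0..<k. real a - real i) / fact k"
  using gbinomial_mult_fact[of k "real a"] by (simp add: binomial_gbinomial field_simps)

lemma ch6: "real (a choose 6) = real a * (real a - 1) * (real a - 2) * (real a - 3) * (real a - 4) * (real a - 5) / 720"
  by (simp add: ch numeral_eq_Suc fact_Suc prod.atLeast0_lessThan_Suc algebra_simps)
lemma ch4: "real (a choose 4) = real a * (real a - 1) * (real a - 2) * (real a - 3) / 24"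
  by (simp add: ch numeral_eq_Suc fact_Suc prod.atLeast0_lessThan_Suc algebra_simps)
lemma ch2: "real (a choose 2) = real a * (real a - 1) / 2"
  by (simp add: ch numeral_eq_Suc fact_Suc prod.atLeast0_lessThan_Suc algebra_simps)

lemma S1': "SS 1 ff = fps_const 2 * ff^3"
  using SS_pow[of 0] by (simp add: numeral_eq_Suc)
lemma S3': "SS 3 (ff^3) = fps_const 12 * ff^5"
  using SS_pow[of 2] by (simp add: numeral_eq_Suc)
lemma S5': "SS 5 (ff^5) = fps_const 30 * ff^7"
  using SS_pow[of 4] by (simp add: numeral_eq_Suc)

lemma p3: "m \<ge> 2 \<Longrightarrow> (ff^3) $ m = ((real m - 1) * (real m - 2) * ff $ m + (real m - 3)^2 * ff $ (m-2)) / 2"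
  using SS_nth[of m 1 ff] unfolding S1' by simp
lemma p5: "m \<ge> 2 \<Longrightarrow> (ff^5) $ m = ((real m - 3) * (real m - 4) * (ff^3) $ m + (real m - 5)^2 * (ff^3) $ (m-2)) / 12"
  using SS_nth[of m 3 "ff^3"] unfolding S3' by simp
lemma p7: "m \<ge> 2 \<Longrightarrow> (ff^7) $ m = ((real m - 5) * (real m - 6) * (ff^5) $ m + (real m - 7)^2 * (ff^5) $ (m-2)) / 30"
  using SS_nth[of m 5 "ff^5"] unfolding S5' by simp

theorem mainTheorem9:
  fixes n :: nat
  assumes "n \<ge> 3"
  shows "cauchy2_conv 7 n =
      real ((2*n - 1) choose 6) * cauchy2 (2*n)
    + (12 * real n ^ 2 - 60 * real n + 83) / 15 * real ((2*n) choose 2) * real ((2*n - 3) choose 4)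
        * cauchy2 (2*n - 2)
    + (4 * real n ^ 2 - 24 * real n + 39) * (12 * real n ^ 2 - 72 * real n + 109) / 15
        * real ((2*n) choose 4) * real ((2*n - 5) choose 2) * cauchy2 (2*n - 4)
    + real ((2*n) choose 6) * (2 * real n - 7) ^ 6 * cauchy2 (2*n - 6)"
proof -
  obtain j where n: "n = j + 3" using assms by (metis add.commute le_Suc_ex)
  have e1: "2*n = 2*j+6" "2*n - 1 = 2*j+5" "2*n-2 = 2*j+4" "2*n-3 = 2*j+3" "2*n-4 = 2*j+2" "2*n-5 = 2*j+1" "2*n-6 = 2*j"
    using n by auto
  have ee: "2*j+6-1 = 2*j+5" "2*j+6-2=2*j+4" "2*j+6-3 = 2*j+3" "2*j+6-4 = 2*j+2" "2*j+6-5=2*j+1" "2*j+6-6 = 2*j" by simp_all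
  have dd: "2*j+6-2 = 2*j+4" "2*j+4-2 = 2*j+2" "2*j+2-2 = 2*j" by simp_all
  define c0 where "c0 = ff $ (2*j+6)"
  define c1 where "c1 = ff $ (2*j+4)"
  define c2 where "c2 = ff $ (2*j+2)"
  define c3 where "c3 = ff $ (2*j)"
  have q7: "(ff^7) $ (2*j+6) = ((real (2*j+6) - 5) * (real (2*j+6) - 6) * (ff^5) $ (2*j+6) + (real (2*j+6) - 7)^2 * (ff^5) $ (2*j+4)) / 30"
    using p7[of "2*j+6", unfolded dd] by simp
  have q5a: "(ff^5) $ (2*j+6) = ((real (2*j+6) - 3) * (real (2*j+6) - 4) * (ff^3) $ (2*j+6) + (real (2*j+6) - 5)^2 * (ff^3) $ (2*j+4)) / 12"
    using p5[of "2*j+6", unfolded dd] by simp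
  have q5b: "(ff^5) $ (2*j+4) = ((real (2*j+4) - 3) * (real (2*j+4) - 4) * (ff^3) $ (2*j+4) + (real (2*j+4) - 5)^2 * (ff^3) $ (2*j+2)) / 12"
    using p5[of "2*j+4", unfolded dd] by simp
  have q3a: "(ff^3) $ (2*j+6) = ((real (2*j+6) - 1) * (real (2*j+6) - 2) * c0 + (real (2*j+6) - 3)^2 * c1) / 2"
    using p3[of "2*j+6", unfolded dd] by (simp add: c0_def c1_def)
  have q3b: "(ff^3) $ (2*j+4) = ((real (2*j+4) - 1) * (real (2*j+4) - 2) * c1 + (real (2*j+4) - 3)^2 * c2) / 2"
    using p3[of "2*j+4", unfolded dd] by (simp add: c1_def c2_def)
  have q3c: "(ff^3) $ (2*j+2) = ((real (2*j+2) - 1) * (real (2*j+2) - 2) * c2 + (real (2*j+2) - 3)^2 * c3) / 2"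
    using p3[of "2*j+2", unfolded dd] by (simp add: c2_def c3_def)
  have F: "fact (2*j+6) = (real (2*j+6)*(2*j+5)*(2*j+4)*(2*j+3)*(2*j+2)*(2*j+1)) * (fact (2*j)::real)"
    "fact (2*j+4) = (real (2*j+4)*(2*j+3)*(2*j+2)*(2*j+1)) * (fact (2*j)::real)"
    "fact (2*j+2) = (real (2*j+2)*(2*j+1)) * (fact (2*j)::real)"
    by (simp_all add: fact_Suc algebra_simps numeral_eq_Suc)
  show ?thesis
    unfolding conv_ff cauchy2_ff e1 unfolding n
    apply (simp only: ee q7 q5a q5b q3a q3b q3c c0_def[symmetric] c1_def[symmetric] c2_def[symmetric] c3_def[symmetric] F ch6 ch4 ch2)
    apply (simp add: field_simps)
    apply algebra
    done
qed

end
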